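(* Let $\delta\in(0,1]$, let $G$ be an $n$-vertex graph and let $V(G)=X_1\cup\dots\cup X_k$ be a partition such that each $X_i$ is a clique in $G$ and $(X_i,X_j)$ is induced $M_2$-free for every $1\le i<j\le k$. Then there is a $\delta$-homogeneous partition of $V(G)$ which refines $\{X_1,\dots,X_k\}$ and has at most $k(2/\delta)^k$ parts.
   Context: For disjoint $X,Y\subseteq V(G)$, an induced copy of $M_2$ in $(X,Y)$ is an unordered quadruple $x,x',y,y'$ with $x,x'\in X$, $y,y'\in Y$, $(x,y),(x',y')\in E(G)$ and $(x,y'),(x',y)\notin E(G)$; $(X,Y)$ is induced $M_2$-free if it contains no such copy. A pair $(A,B)$ of disjoint vertex sets is homogeneous if the bipartite graph of $G$ between $A$ and $B$ is complete or empty. A partition $\mathcal P$ of $V(G)$ of an $n$-vertex graph is $\delta$-homogeneous if the sum of $|U||V|$ over all unordered pairs of distinct parts $U,V\in\mathcal P$ such that $(U,V)$ is not homogeneous is at most $\delta n^2$. A partition $\mathcal P_2$ refines $\mathcal P_1$ if every part of $\mathcal P_2$ is contained in a part of $\mathcal P_1$. *)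

theory Defs
  imports Complex_Main "HOL-Library.Disjoint_Sets"
begin

text \<open>Graphs: a finite vertex set V with a symmetric irreflexive edge relation E.\<close>

definition clique :: "('a \<Rightarrow> 'a \<Rightarrow> bool) \<Rightarrow> 'a set \<Rightarrow> bool" where
  "clique E X \<longleftrightarrow> (\<forall>x\<in>X. \<forall>y\<in>X. x \<noteq> y \<longrightarrow> E x y)"

definition induced_M2_free :: "('a \<Rightarrow> 'a \<Rightarrow> bool) \<Rightarrow> 'a set \<Rightarrow> 'a set \<Rightarrow> bool" where
  "induced_M2_free E X Y \<longleftrightarrow>
     \<not> (\<exists>x\<in>X. \<exists>x'\<in>X. \<exists>y\<in>Y. \<exists>y'\<in>Y.
          E x y \<and> E x' y' \<and> \<not> E x y' \<and> \<not> E x' y)"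

definition homogeneous :: "('a \<Rightarrow> 'a \<Rightarrow> bool) \<Rightarrow> 'a set \<Rightarrow> 'a set \<Rightarrow> bool" where
  "homogeneous E A B \<longleftrightarrow> (\<forall>a\<in>A. \<forall>b\<in>B. E a b) \<or> (\<forall>a\<in>A. \<forall>b\<in>B. \<not> E a b)"

text \<open>Sum over unordered pairs of distinct parts = half the sum over ordered pairs.\<close>
definition delta_homogeneous ::
  "('a \<Rightarrow> 'a \<Rightarrow> bool) \<Rightarrow> 'a set \<Rightarrow> 'a set set \<Rightarrow> real \<Rightarrow> bool" where
  "delta_homogeneous E V P \<delta> \<longleftrightarrow>
     (\<Sum>(U, W)\<in>{(U, W). U \<in> P \<and> W \<in> P \<and> U \<noteq> W \<and> \<not> homogeneous E U W}.
         real (card U * card W)) / 2 \<le> \<delta> * (real (card V))\<^sup>2"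

definition refines :: "'a set set \<Rightarrow> 'a set set \<Rightarrow> bool" where
  "refines P2 P1 \<longleftrightarrow> (\<forall>U\<in>P2. \<exists>W\<in>P1. U \<subseteq> W)"

end

theory Submission
  imports Defs
begin

lemma pair_sum: "2 * (\<Sum>j<k. (f::nat\<Rightarrow>nat) j * (\<Sum>i<j. f i)) \<le> (\<Sum>i<k. f i)^2"
proof (induction k)
  case 0 then show ?case by simp
next
  case (Suc k)
  define S where "S = (\<Sum>i<k. f i)"
  have "2 * (\<Sum>j<Suc k. f j * (\<Sum>i<j. f i)) = 2 * (\<Sum>j<k. f j * (\<Sum>i<j. f i)) + 2 * f k * S"
    by (simp add: S_def algebra_simps)
  also have "\<dots> \<le> S^2 + 2 * f k * S" using Suc S_def by simp
  also have "\<dots> \<le> (S + f k)^2" by (simp add: power2_eq_square algebra_simps)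
  finally show ?case by (simp add: S_def)
qed

locale L =
  fixes V :: "'a set" and E :: "'a \<Rightarrow> 'a \<Rightarrow> bool"
    and X :: "nat \<Rightarrow> 'a set" and k :: nat and \<delta> :: real and g :: "'a \<Rightarrow> nat"
  assumes delta: "0 < \<delta>" "\<delta> \<le> 1"
    and finV: "finite V"
    and symE: "\<And>u v. E u v \<Longrightarrow> E v u"
    and disj: "\<And>i j. i < k \<Longrightarrow> j < k \<Longrightarrow> i \<noteq> j \<Longrightarrow> X i \<inter> X j = {}"
    and cover: "(\<Union>i<k. X i) = V"
    and cliques: "\<And>i. i < k \<Longrightarrow> clique E (X i)"
    and M2free: "\<And>i j. i < j \<Longrightarrow> j < k \<Longrightarrow> induced_M2_free E (X i) (X j)"
    and ginj: "inj_on g V" and gbound: "\<And>v. v \<in> V \<Longrightarrow> g v < card V"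
begin

definition "n = card V"
definition "NN = nat \<lceil>1/\<delta>\<rceil>"
definition "a i = card (X i)"
definition "r j x = card {y\<in>X j. E x y}"
definition "key j x = (a j - r j x) * n + g x"
definition "pos i j x = card {x'\<in>X i. key j x' < key j x}"
definition "bw i = a i div NN + 1"
definition "\<beta> i v = v div bw i"
definition "cl v = (SOME i. i < k \<and> v \<in> X i)"
definition "lab v j = (if j < cl v then \<beta> j (r j v)
    else if cl v < j then \<beta> (cl v) (pos (cl v) j v) else 0)"

lemma X_sub: "i < k \<Longrightarrow> X i \<subseteq> V" using cover by blast
lemma finX: "i < k \<Longrightarrow> finite (X i)" using X_sub finV finite_subset by blast

lemma cl_eq: assumes "i < k" "v \<in> X i" shows "cl v = i"
proof -
  have "\<exists>i. i < k \<and> v \<in> X i" using assms by blast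
  then have "cl v < k \<and> v \<in> X (cl v)" unfolding cl_def by (rule someI_ex)
  then show ?thesis using disj assms by blast
qed

lemma cl_mem: assumes "v \<in> V" shows "cl v < k" "v \<in> X (cl v)"
proof -
  obtain i where "i < k" "v \<in> X i" using assms cover by blast
  then show "cl v < k" "v \<in> X (cl v)" using cl_eq by auto
qed

lemma chain:
  assumes "i < j" "j < k" "x \<in> X i" "x' \<in> X i"
  shows "{y\<in>X j. E x y} \<subseteq> {y\<in>X j. E x' y} \<or> {y\<in>X j. E x' y} \<subseteq> {y\<in>X j. E x y}"
  using M2free[OF assms(1,2)] assms(3,4) unfolding induced_M2_free_def by blast

lemma r_le: "j < k \<Longrightarrow> r j x \<le> a j"
  unfolding r_def a_def by (intro card_mono finX) auto

lemma key_inj: "inj_on (key j) V"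
proof (rule inj_onI)
  fix x y assume xy: "x \<in> V" "y \<in> V" "key j x = key j y"
  have "key j x mod n = g x" "key j y mod n = g y"
    using gbound[OF xy(1)] gbound[OF xy(2)] unfolding key_def n_def
    by (metis mod_less mod_mult_self3)+
  then show "x = y" using xy ginj inj_on_def by metis
qed

lemma down:
  assumes ij: "i < j" "j < k" and x: "x \<in> X i" "x' \<in> X i"
    and lt: "key j x' < key j x" and w: "E x w" "w \<in> X j"
  shows "E x' w"
proof -
  have i: "i < k" using ij by simp
  have gx: "g x < n" "g x' < n" using gbound x X_sub[OF i] unfolding n_def by auto
  have "a j - r j x' \<le> a j - r j x"
  proof (rule ccontr)
    assume "\<not> ?thesis"
    then have "a j - r j x + 1 \<le> a j - r j x'" by simp
    then have "(a j - r j x + 1) * n \<le> (a j - r j x') * n" by (rule mult_le_mono1)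
    then have "(a j - r j x) * n + n \<le> (a j - r j x') * n" by (simp add: algebra_simps)
    then show False using lt gx unfolding key_def by linarith
  qed
  then have le: "r j x \<le> r j x'" using r_le[OF ij(2), of x] r_le[OF ij(2), of x'] by arith
  show ?thesis
  proof (cases "{y\<in>X j. E x y} \<subseteq> {y\<in>X j. E x' y}")
    case True then show ?thesis using w by blast
  next
    case False
    then have "{y\<in>X j. E x' y} \<subset> {y\<in>X j. E x y}" using chain[OF ij x] by blast
    then have "r j x' < r j x" unfolding r_def by (intro psubset_card_mono) (use finX[of j] ij in auto)
    then show ?thesis using le by simp
  qed
qed

lemma K:
  assumes ij: "i < j" "j < k" and u: "u \<in> X i" and w: "w \<in> X j"
  shows "E u w \<longleftrightarrow> pos i j u < r i w"
proof -
  have i: "i < k" using ij by simp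
  define D where "D = {x\<in>X i. E x w}"
  have rD: "r i w = card D" unfolding r_def D_def using symE by metis
  have fD: "finite D" unfolding D_def using finX[OF i] by simp
  have kinj: "inj_on (key j) (X i)" using key_inj X_sub[OF i] inj_on_subset by blast
  show ?thesis
  proof
    assume e: "E u w"
    have "{x'\<in>X i. key j x' < key j u} \<subseteq> D - {u}"
    proof
      fix z assume z: "z \<in> {x'\<in>X i. key j x' < key j u}"
      then have "E z w" using down[OF ij u _ _ e w, of z] by auto
      then show "z \<in> D - {u}" using z unfolding D_def by auto
    qed
    then have "pos i j u \<le> card (D - {u})" unfolding pos_def using fD by (intro card_mono) auto
    also have "\<dots> < card D" using e u fD unfolding D_def by (intro card_Diff1_less) auto
    finally show "pos i j u < r i w" using rD by simp
  next
    assume p: "pos i j u < r i w"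
    show "E u w"
    proof (rule ccontr)
      assume ne: "\<not> E u w"
      have "D \<subseteq> {x'\<in>X i. key j x' < key j u}"
      proof
        fix d assume d: "d \<in> D"
        then have "d \<noteq> u" using ne unfolding D_def by auto
        then have "key j d \<noteq> key j u" using kinj d u unfolding D_def inj_on_def by blast
        moreover have "\<not> key j u < key j d"
        proof
          assume "key j u < key j d"
          moreover have "d \<in> X i" "E d w" using d unfolding D_def by auto
          ultimately have "E u w" using down[OF ij _ u _ _ w] by blast
          then show False using ne by simp
        qed
        ultimately show "d \<in> {x'\<in>X i. key j x' < key j u}" using d unfolding D_def by auto
      qed
      then have "card D \<le> pos i j u" unfolding pos_def by (intro card_mono) (use finX[OF i] in auto)
      then show False using p rD by simp
    qed
  qed
qed

lemma pos_mono:
  assumes i: "i < k" and x: "x \<in> X i" "y \<in> X i" and lt: "key j x < key j y"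
  shows "pos i j x < pos i j y"
  unfolding pos_def
  by (rule psubset_card_mono) (use finX[OF i] x lt in auto)

lemma pos_inj: assumes i: "i < k" shows "inj_on (pos i j) (X i)"
proof (rule inj_onI)
  fix x y assume xy: "x \<in> X i" "y \<in> X i" "pos i j x = pos i j y"
  have kinj: "inj_on (key j) (X i)" using key_inj X_sub[OF i] inj_on_subset by blast
  show "x = y"
  proof (rule ccontr)
    assume "x \<noteq> y"
    then have "key j x \<noteq> key j y" using kinj xy inj_on_def by metis
    then show False using pos_mono[OF i, of x y j] pos_mono[OF i, of y x j] xy by linarith
  qed
qed

lemma pos_le: "i < k \<Longrightarrow> pos i j x \<le> a i"
  unfolding pos_def a_def by (intro card_mono finX) auto


lemma NN_props: "1 \<le> NN" "1/\<delta> \<le> real NN" "real NN \<le> 2/\<delta>"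
proof -
  have d1: "1 \<le> 1/\<delta>" using delta by simp
  have c1: "1/\<delta> \<le> of_int \<lceil>1/\<delta>\<rceil>" by (rule le_of_int_ceiling)
  have c2: "of_int \<lceil>1/\<delta>\<rceil> < 1/\<delta> + 1" using ceiling_correct[of "1/\<delta>"] by linarith
  have pos: "0 < \<lceil>1/\<delta>\<rceil>" using d1 c1 by linarith
  have eq: "real NN = of_int \<lceil>1/\<delta>\<rceil>" unfolding NN_def using pos by simp
  show "1/\<delta> \<le> real NN" using eq c1 by simp
  then show "1 \<le> NN" using d1 by simp
  have "1/\<delta> + 1 \<le> 2/\<delta>" using d1 by simp
  then show "real NN \<le> 2/\<delta>" using eq c2 by simp
qed

lemma beta_lt: assumes "v \<le> a i" shows "\<beta> i v < NN"
proof -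
  have m: "a i mod NN < NN" using NN_props(1) by simp
  have "a i = NN * (a i div NN) + a i mod NN" by simp
  then have "a i < NN * (a i div NN) + NN" using m by linarith
  then have "a i < NN * bw i" unfolding bw_def by (simp add: algebra_simps)
  then have "a i div bw i < NN" by (intro less_mult_imp_div_less) (simp add: mult.commute)
  moreover have "v div bw i \<le> a i div bw i" using assms by (rule div_le_mono)
  ultimately show ?thesis unfolding \<beta>_def by simp
qed

lemma beta_mono: "v \<le> v' \<Longrightarrow> \<beta> i v \<le> \<beta> i v'"
  unfolding \<beta>_def by (rule div_le_mono)

lemma beta_id: "a i < NN \<Longrightarrow> \<beta> i v = v"
  unfolding \<beta>_def bw_def by simp

lemma bin_card: assumes i: "i < k" shows "card {x\<in>X i. \<beta> i (pos i j x) = t} \<le> bw i"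
proof -
  define S where "S = {x\<in>X i. \<beta> i (pos i j x) = t}"
  have inj: "inj_on (pos i j) S" using pos_inj[OF i] by (rule inj_on_subset) (simp add: S_def)
  have bp: "bw i > 0" unfolding bw_def by simp
  have sub: "pos i j ` S \<subseteq> {t * bw i..<t * bw i + bw i}"
  proof (rule image_subsetI)
    fix x assume "x \<in> S"
    then have vt: "pos i j x div bw i = t" unfolding S_def \<beta>_def by simp
    have e: "pos i j x = t * bw i + pos i j x mod bw i" using div_mult_mod_eq[of "pos i j x" "bw i"] vt by simp
    have m: "pos i j x mod bw i < bw i" using bp by simp
    show "pos i j x \<in> {t * bw i..<t * bw i + bw i}"
      unfolding atLeastLessThan_iff using e m by linarith
  qed
  have "card S = card (pos i j ` S)" using inj by (simp add: card_image)
  also have "\<dots> \<le> card {t * bw i..<t * bw i + bw i}" by (rule card_mono[OF _ sub]) simp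
  also have "\<dots> = bw i" by simp
  finally show ?thesis unfolding S_def .
qed

definition "label v = (cl v, map (lab v) [0..<k])"
definition "cls v = {u\<in>V. label u = label v}"
definition "P = cls ` V"

lemma lab_lt: assumes "v \<in> V" "j < k" shows "lab v j < NN"
  using assms cl_mem[OF assms(1)] NN_props(1) r_le pos_le beta_lt unfolding lab_def by auto

lemma label_range: "label ` V \<subseteq> {..<k} \<times> {xs. set xs \<subseteq> {..<NN} \<and> length xs = k}"
  unfolding label_def using lab_lt cl_mem by auto

lemma card_P: "card P \<le> k * NN ^ k"
proof -
  have "P = (\<lambda>L. {u\<in>V. label u = L}) ` (label ` V)" unfolding P_def cls_def by auto
  then have "card P \<le> card (label ` V)" using card_image_le[OF finite_imageI[OF finV]] by simp
  also have "\<dots> \<le> card ({..<k} \<times> {xs. set xs \<subseteq> {..<NN} \<and> length xs = k})"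
    by (rule card_mono[OF _ label_range]) (simp add: finite_lists_length_eq)
  also have "\<dots> = k * NN ^ k" by (simp add: card_cartesian_product card_lists_length_eq)
  finally show ?thesis .
qed

lemma cls_label: "u \<in> cls v \<Longrightarrow> label u = label v" unfolding cls_def by auto

lemma label_eq: assumes "label u = label v" shows "cl u = cl v" "j < k \<Longrightarrow> lab u j = lab v j"
proof -
  show "cl u = cl v" using assms unfolding label_def by simp
  assume "j < k"
  then show "lab u j = lab v j"
    using arg_cong[OF assms, of "\<lambda>L. snd L ! j"] unfolding label_def by simp
qed

lemma cls_sub: "v \<in> V \<Longrightarrow> cls v \<subseteq> X (cl v)"
proof
  fix u assume "u \<in> cls v"
  then have l: "label u = label v" and uV: "u \<in> V" unfolding cls_def by auto
  have "cl u = cl v" using l by (rule label_eq(1))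
  then show "u \<in> X (cl v)" using cl_mem(2)[OF uV] by simp
qed

lemma cls_disj: "cls u \<noteq> cls v \<Longrightarrow> cls u \<inter> cls v = {}"
  unfolding cls_def by auto

lemma partition: "partition_on V P"
  unfolding partition_on_def P_def
proof (intro conjI)
  show "\<Union> (cls ` V) = V" unfolding cls_def by auto
  show "disjoint (cls ` V)" unfolding disjoint_def using cls_disj by auto
  show "{} \<notin> cls ` V" unfolding cls_def by auto
qed

lemma refines: "refines P (X ` {..<k})"
  unfolding refines_def P_def using cls_sub cl_mem by blast

lemma hom_same: assumes "u \<in> V" "w \<in> V" "cl u = cl w" "cls u \<noteq> cls w"
  shows "homogeneous E (cls u) (cls w)"
proof -
  have "\<forall>x\<in>cls u. \<forall>y\<in>cls w. E x y"
  proof (intro ballI)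
    fix x y assume xy: "x \<in> cls u" "y \<in> cls w"
    then have "x \<noteq> y" using cls_disj[OF assms(4)] by auto
    moreover have "x \<in> X (cl u)" "y \<in> X (cl u)"
      using xy cls_sub[OF assms(1)] cls_sub[OF assms(2)] assms(3) by auto
    ultimately show "E x y" using cliques[OF cl_mem(1)[OF assms(1)]] unfolding clique_def by blast
  qed
  then show ?thesis unfolding homogeneous_def by blast
qed

lemma lab_small: assumes "u \<in> X i" "i < j" "j < k" shows "lab u j = \<beta> i (pos i j u)"
proof -
  have "cl u = i" using cl_eq[of i u] assms by simp
  then show ?thesis unfolding lab_def using assms(2) by simp
qed
lemma lab_big: assumes "w \<in> X j" "i < j" "j < k" shows "lab w i = \<beta> i (r i w)"
proof -
  have "cl w = j" using cl_eq[of j w] assms by simp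
  then show ?thesis unfolding lab_def using assms(2) by simp
qed

lemma bad: assumes uw: "u \<in> V" "w \<in> V" and ij: "cl u < cl w" and nh: "\<not> homogeneous E (cls u) (cls w)"
  shows "NN \<le> a (cl u) \<and> lab u (cl w) = lab w (cl u)"
proof -
  define i where "i = cl u"
  define j where "j = cl w"
  have ij': "i < j" "j < k" using ij cl_mem uw unfolding i_def j_def by auto
  have U: "\<And>u'. u' \<in> cls u \<Longrightarrow> u' \<in> X i \<and> \<beta> i (pos i j u') = lab u j"
  proof -
    fix u' assume h: "u' \<in> cls u"
    then have x: "u' \<in> X i" using cls_sub uw unfolding i_def by auto
    have "lab u' j = lab u j" using label_eq(2)[OF cls_label[OF h] ij'(2)] .
    then show "u' \<in> X i \<and> \<beta> i (pos i j u') = lab u j" using x lab_small[OF x ij'] by simp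
  qed
  have W: "\<And>w'. w' \<in> cls w \<Longrightarrow> w' \<in> X j \<and> \<beta> i (r i w') = lab w i"
  proof -
    fix w' assume h: "w' \<in> cls w"
    then have x: "w' \<in> X j" using cls_sub uw unfolding j_def by auto
    have "lab w' i = lab w i" using label_eq(2)[OF cls_label[OF h]] ij' by simp
    then show "w' \<in> X j \<and> \<beta> i (r i w') = lab w i" using x lab_big[OF x ij'] by simp
  qed
  obtain u1 w1 where 1: "u1 \<in> cls u" "w1 \<in> cls w" "E u1 w1" using nh unfolding homogeneous_def by blast
  obtain u2 w2 where 2: "u2 \<in> cls u" "w2 \<in> cls w" "\<not> E u2 w2" using nh unfolding homogeneous_def by blast
  have p1: "pos i j u1 < r i w1" using K[OF ij'] 1 U W by blast
  have p2: "\<not> pos i j u2 < r i w2" using K[OF ij'] 2 U W by blast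
  have "lab u j \<le> lab w i" using beta_mono[of "pos i j u1" "r i w1" i] p1 U[OF 1(1)] W[OF 1(2)] by simp
  moreover have "lab w i \<le> lab u j" using beta_mono[of "r i w2" "pos i j u2" i] p2 U[OF 2(1)] W[OF 2(2)] by simp
  ultimately have eq: "lab u j = lab w i" by simp
  have "NN \<le> a i"
  proof (rule ccontr)
    assume "\<not> NN \<le> a i"
    then have "\<beta> i (pos i j u1) = pos i j u1" "\<beta> i (r i w1) = r i w1" using beta_id by auto
    then show False using eq p1 U[OF 1(1)] W[OF 1(2)] by simp
  qed
  then show ?thesis using eq unfolding i_def j_def by simp
qed


definition "Z i j = {(u,w). u \<in> X i \<and> w \<in> X j \<and> NN \<le> a i \<and> lab u j = lab w i}"

lemma finZ: "i < k \<Longrightarrow> j < k \<Longrightarrow> finite (Z i j)"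
  by (rule finite_subset[of _ "X i \<times> X j"]) (auto simp: Z_def finX)

lemma card_Z: assumes ij: "i < j" "j < k"
  shows "real (card (Z i j)) \<le> 2 * \<delta> * (real (a i) * real (a j))"
proof (cases "NN \<le> a i")
  case False
  then have "Z i j = {}" unfolding Z_def by auto
  then show ?thesis using delta by simp
next
  case True
  have i: "i < k" using ij by simp
  have "Z i j \<subseteq> (\<Union>w\<in>X j. {u\<in>X i. \<beta> i (pos i j u) = \<beta> i (r i w)} \<times> {w})"
    unfolding Z_def using lab_small[OF _ ij] lab_big[OF _ ij] by auto
  then have "card (Z i j) \<le> card (\<Union>w\<in>X j. {u\<in>X i. \<beta> i (pos i j u) = \<beta> i (r i w)} \<times> {w})"
    by (intro card_mono) (use finX[OF i] finX[OF ij(2)] in auto)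
  also have "\<dots> \<le> (\<Sum>w\<in>X j. card ({u\<in>X i. \<beta> i (pos i j u) = \<beta> i (r i w)} \<times> {w}))"
    by (rule card_UN_le) (rule finX[OF ij(2)])
  also have "\<dots> \<le> (\<Sum>w\<in>X j. bw i)"
    by (intro sum_mono) (simp add: card_cartesian_product bin_card[OF i])
  also have "\<dots> = bw i * a j" unfolding a_def by simp
  finally have "real (card (Z i j)) \<le> real (bw i * a j)" by (rule of_nat_mono)
  then have c: "real (card (Z i j)) \<le> real (bw i) * real (a j)" by (simp only: of_nat_mult)
  have NNp: "1 \<le> real NN" "1/\<delta> \<le> real NN" using NN_props by auto
  have "a i div NN * NN \<le> a i" by simp
  then have "real (a i div NN * NN) \<le> real (a i)" by (rule of_nat_mono)
  then have "real (a i div NN) * real NN \<le> real (a i)" by (simp only: of_nat_mult)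
  then have d: "real (a i div NN) \<le> real (a i) / real NN" using NNp by (simp add: field_simps)
  have "real (a i) / real NN \<le> \<delta> * real (a i)"
  proof -
    have "1 \<le> \<delta> * real NN" using NNp delta by (simp add: field_simps)
    then have "real (a i) * 1 \<le> real (a i) * (\<delta> * real NN)" by (rule mult_left_mono) simp
    then have "real (a i) \<le> \<delta> * real (a i) * real NN" by (simp add: mult_ac)
    then show ?thesis using NNp by (simp add: field_simps)
  qed
  moreover have "1 \<le> \<delta> * real (a i)"
  proof -
    have "1 \<le> \<delta> * real NN" using NNp delta by (simp add: field_simps)
    also have "\<dots> \<le> \<delta> * real (a i)" using True delta by simp
    finally show ?thesis .
  qed
  ultimately have "real (bw i) \<le> 2 * \<delta> * real (a i)" unfolding bw_def using d by simp
  then have "real (bw i) * real (a j) \<le> 2 * \<delta> * real (a i) * real (a j)"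
    by (rule mult_right_mono) simp
  then show ?thesis using c by (simp add: mult.assoc)
qed


lemma n_sum: "n = (\<Sum>i<k. a i)"
proof -
  have "n = card (\<Union>i<k. X i)" unfolding n_def using cover by simp
  also have "\<dots> = (\<Sum>i<k. card (X i))"
    by (rule card_UN_disjoint) (use finX disj in auto)
  finally show ?thesis unfolding a_def .
qed

lemma cls_eq: "x \<in> cls v \<Longrightarrow> cls x = cls v \<and> x \<in> V" unfolding cls_def by auto

lemma hom_sym: "homogeneous E U W \<longleftrightarrow> homogeneous E W U"
  unfolding homogeneous_def using symE by blast

lemma delta_hom: "delta_homogeneous E V P \<delta>"
proof -
  define Q where "Q = {(U, W). U \<in> P \<and> W \<in> P \<and> U \<noteq> W \<and> \<not> homogeneous E U W}"
  define Z' where "Z' = (\<Union>j<k. \<Union>i<j. Z i j \<union> prod.swap ` Z i j)"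
  have finP: "finite P" unfolding P_def using finV by simp
  have finQ: "finite Q" by (rule finite_subset[of _ "P \<times> P"]) (auto simp: Q_def finP)
  have Psub: "\<And>U. U \<in> P \<Longrightarrow> U \<subseteq> V" unfolding P_def cls_def by auto
  have finPart: "\<And>U. U \<in> P \<Longrightarrow> finite U" using Psub finV finite_subset by blast
  have Pdisj: "\<And>U U'. U \<in> P \<Longrightarrow> U' \<in> P \<Longrightarrow> U \<inter> U' \<noteq> {} \<Longrightarrow> U = U'"
    unfolding P_def using cls_disj by blast
  have "(\<Sum>(U, W)\<in>Q. real (card U * card W)) = real (\<Sum>p\<in>Q. card (fst p \<times> snd p))"
    by (simp add: of_nat_sum case_prod_beta card_cartesian_product)
  also have "(\<Sum>p\<in>Q. card (fst p \<times> snd p)) = card (\<Union>p\<in>Q. fst p \<times> snd p)"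
  proof (rule card_UN_disjoint[symmetric])
    show "finite Q" by (rule finQ)
    show "\<forall>p\<in>Q. finite (fst p \<times> snd p)" using finPart unfolding Q_def by auto
    show "\<forall>p\<in>Q. \<forall>q\<in>Q. p \<noteq> q \<longrightarrow> (fst p \<times> snd p) \<inter> (fst q \<times> snd q) = {}"
    proof (intro ballI impI)
      fix p q assume pq: "p \<in> Q" "q \<in> Q" "p \<noteq> q"
      show "(fst p \<times> snd p) \<inter> (fst q \<times> snd q) = {}"
      proof (rule ccontr)
        obtain U W U' W' where p: "p = (U, W)" and q: "q = (U', W')" by force
        have inP: "U \<in> P" "W \<in> P" "U' \<in> P" "W' \<in> P" using pq p q unfolding Q_def by auto
        assume "(fst p \<times> snd p) \<inter> (fst q \<times> snd q) \<noteq> {}"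
        then have "U \<inter> U' \<noteq> {}" "W \<inter> W' \<noteq> {}" using p q by auto
        then have "U = U'" "W = W'" using Pdisj inP by auto
        then show False using pq p q by simp
      qed
    qed
  qed
  also have "card (\<Union>p\<in>Q. fst p \<times> snd p) \<le> card Z'"
  proof (rule card_mono)
    show "finite Z'" unfolding Z'_def using finZ by auto
    show "(\<Union>p\<in>Q. fst p \<times> snd p) \<subseteq> Z'"
    proof
      fix z assume "z \<in> (\<Union>p\<in>Q. fst p \<times> snd p)"
      then obtain U W x y where z: "z = (x, y)" "(U, W) \<in> Q" "x \<in> U" "y \<in> W" by auto
      obtain v v' where vv: "U = cls v" "W = cls v'" "v \<in> V" "v' \<in> V" using z unfolding Q_def P_def by auto
      have xy: "U = cls x" "W = cls y" "x \<in> V" "y \<in> V" using cls_eq vv z by metis+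
      have ne: "cls x \<noteq> cls y" "\<not> homogeneous E (cls x) (cls y)" using z xy unfolding Q_def by auto
      have ck: "cl x < k" "cl y < k" using cl_mem xy by auto
      consider "cl x = cl y" | "cl x < cl y" | "cl y < cl x" by linarith
      then show "z \<in> Z'"
      proof cases
        case 1 then show ?thesis using hom_same[OF xy(3,4) 1 ne(1)] ne(2) by simp
      next
        case 2
        have "(x, y) \<in> Z (cl x) (cl y)" using bad[OF xy(3,4) 2 ne(2)] cl_mem xy unfolding Z_def by auto
        then show ?thesis unfolding Z'_def z using 2 ck by blast
      next
        case 3
        have "\<not> homogeneous E (cls y) (cls x)" using ne hom_sym by blast
        then have "(y, x) \<in> Z (cl y) (cl x)" using bad[OF xy(4,3) 3] cl_mem xy unfolding Z_def by auto
        then have "(x, y) \<in> prod.swap ` Z (cl y) (cl x)" by force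
        then show ?thesis unfolding Z'_def z using 3 ck by blast
      qed
    qed
  qed
  also have "card Z' \<le> (\<Sum>j<k. \<Sum>i<j. card (Z i j \<union> prod.swap ` Z i j))"
    unfolding Z'_def
  proof (rule order_trans[OF card_UN_le])
    show "(\<Sum>j<k. card (\<Union>i<j. Z i j \<union> prod.swap ` Z i j))
      \<le> (\<Sum>j<k. \<Sum>i<j. card (Z i j \<union> prod.swap ` Z i j))"
      by (rule sum_mono, rule card_UN_le) simp
  qed simp
  also have "\<dots> \<le> (\<Sum>j<k. \<Sum>i<j. 2 * card (Z i j))"
  proof (intro sum_mono)
    fix j i assume ji: "j \<in> {..<k}" "i \<in> {..<j}"
    have "card (Z i j \<union> prod.swap ` Z i j) \<le> card (Z i j) + card (prod.swap ` Z i j)"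
      by (rule card_Un_le)
    also have "card (prod.swap ` Z i j) \<le> card (Z i j)"
      by (rule card_image_le) (use finZ ji in auto)
    finally show "card (Z i j \<union> prod.swap ` Z i j) \<le> 2 * card (Z i j)" by simp
  qed
  finally have s1: "(\<Sum>(U, W)\<in>Q. real (card U * card W)) \<le> real (\<Sum>j<k. \<Sum>i<j. 2 * card (Z i j))"
    by simp
  also have "\<dots> = (\<Sum>j<k. \<Sum>i<j. 2 * real (card (Z i j)))" by (simp add: of_nat_sum)
  also have "\<dots> \<le> (\<Sum>j<k. \<Sum>i<j. 2 * (2 * \<delta> * (real (a i) * real (a j))))"
  proof (rule sum_mono, rule sum_mono)
    fix j i assume "j \<in> {..<k}" "i \<in> {..<j}"
    then show "2 * real (card (Z i j)) \<le> 2 * (2 * \<delta> * (real (a i) * real (a j)))"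
      using card_Z[of i j] by simp
  qed
  also have "\<dots> = (\<Sum>j<k. \<Sum>i<j. (4 * \<delta>) * (real (a j) * real (a i)))"
    by (intro sum.cong refl) (simp add: algebra_simps)
  also have "\<dots> = 4 * \<delta> * (\<Sum>j<k. \<Sum>i<j. real (a j) * real (a i))"
    by (simp only: sum_distrib_left)
  also have "(\<Sum>j<k. \<Sum>i<j. real (a j) * real (a i)) = real (\<Sum>j<k. a j * (\<Sum>i<j. a i))"
    by (simp only: of_nat_sum of_nat_mult sum_distrib_left)
  also have "4 * \<delta> * real (\<Sum>j<k. a j * (\<Sum>i<j. a i)) \<le> 2 * \<delta> * real ((\<Sum>i<k. a i)^2)"
  proof -
    have "2 * real (\<Sum>j<k. a j * (\<Sum>i<j. a i)) \<le> real ((\<Sum>i<k. a i)^2)"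
      using pair_sum[of a k] of_nat_mono by fastforce
    then show ?thesis using delta by (simp add: mult_left_mono)
  qed
  also have "real ((\<Sum>i<k. a i)^2) = (real (card V))^2" using n_sum unfolding n_def by simp
  finally have "(\<Sum>(U, W)\<in>Q. real (card U * card W)) \<le> 2 * \<delta> * (real (card V))^2" .
  then show ?thesis unfolding delta_homogeneous_def Q_def[symmetric] by linarith
qed

theorem main: "\<exists>P. partition_on V P \<and> delta_homogeneous E V P \<delta>
             \<and> refines P (X ` {..<k}) \<and> real (card P) \<le> real k * (2 / \<delta>) ^ k"
proof (intro exI conjI)
  show "partition_on V P" by (rule partition)
  show "delta_homogeneous E V P \<delta>" by (rule delta_hom)
  show "refines P (X ` {..<k})" by (rule refines)
  have "real (card P) \<le> real (k * NN ^ k)" using card_P by (rule of_nat_mono)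
  then have "real (card P) \<le> real k * real NN ^ k" by simp
  also have "\<dots> \<le> real k * (2 / \<delta>) ^ k"
  proof (rule mult_left_mono)
    show "real NN ^ k \<le> (2 / \<delta>) ^ k" by (rule power_mono[OF NN_props(3)]) simp
  qed simp
  finally show "real (card P) \<le> real k * (2 / \<delta>) ^ k" .
qed

end


theorem lemma2p3:
  fixes V :: "'a set" and E :: "'a \<Rightarrow> 'a \<Rightarrow> bool"
    and X :: "nat \<Rightarrow> 'a set" and k :: nat and \<delta> :: real
  assumes delta: "0 < \<delta>" "\<delta> \<le> 1"
    and finV: "finite V"
    and symE: "\<And>u v. E u v \<Longrightarrow> E v u"
    and irrE: "\<And>v. \<not> E v v"
    and nonempty: "\<And>i. i < k \<Longrightarrow> X i \<noteq> {}"
    and disj: "\<And>i j. i < k \<Longrightarrow> j < k \<Longrightarrow> i \<noteq> j \<Longrightarrow> X i \<inter> X j = {}"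
    and cover: "(\<Union>i<k. X i) = V"
    and cliques: "\<And>i. i < k \<Longrightarrow> clique E (X i)"
    and M2free: "\<And>i j. i < j \<Longrightarrow> j < k \<Longrightarrow> induced_M2_free E (X i) (X j)"
  shows "\<exists>P. partition_on V P \<and> delta_homogeneous E V P \<delta>
             \<and> refines P (X ` {..<k}) \<and> real (card P) \<le> real k * (2 / \<delta>) ^ k"
  proof -
  obtain g where g: "bij_betw g V {0..<card V}" using ex_bij_betw_finite_nat[OF finV] by blast
  have ginj: "inj_on g V" using g bij_betw_def by blast
  have gb: "\<And>v. v \<in> V \<Longrightarrow> g v < card V" using g bij_betwE by fastforce
  interpret L V E X k \<delta> g
    by (rule L.intro) (fact delta(1), fact delta(2), fact finV, fact symE, fact disj,
      fact cover, fact cliques, fact M2free, fact ginj, fact gb)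
  show ?thesis by (rule main)
qed

end
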